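(* Let $\gamma\in\Gamma$, $d=e_1+\varepsilon\gamma$, with orientations chosen so that $Vd\ge0$ for small $\varepsilon\ge0$. If $i\in\{1,\dots,m\}$ satisfies $(Ve_1)_i>0$, then for all $\varepsilon>0$ sufficiently small, $$\big(Vg^*(d)\big)_i<(1+\lambda)(Vd)_i.$$
   Context: $\mathcal G$ is a simple connected oriented graph with nodes $\{1,\dots,n\}$, $m$ edges, incidence matrix $C$, PTDF matrix $V=C(C^TC)^+$; $e$ all-ones; $\lambda\in(0,1)$. $\Gamma=\{\gamma\in\mathbb R^n:\gamma_1=0,\gamma\ge0,e^T\gamma=1\}$. $g^*(d)$ is the unique minimizer of $\frac12\sum_ig_i^2$ over $g\in\mathbb R^n_{\ge0}$ with $e^Tg=e^Td$ and $-\lambda|Vd|\le V(d-g)\le\lambda|Vd|$. *)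

theory Defs
  imports "HOL-Analysis.Analysis"
begin

text \<open>Oriented graph: nodes are the elements of a finite type 'n, edges the elements of
a finite type 'm; edge k goes from src k to tgt k.\<close>

definition simple_oriented_graph :: "('m \<Rightarrow> 'n) \<Rightarrow> ('m \<Rightarrow> 'n) \<Rightarrow> bool" where
  "simple_oriented_graph src tgt \<longleftrightarrow>
     (\<forall>k. src k \<noteq> tgt k) \<and>
     (\<forall>k k'. {src k, tgt k} = {src k', tgt k'} \<longrightarrow> k = k')"

definition adjacent :: "('m \<Rightarrow> 'n) \<Rightarrow> ('m \<Rightarrow> 'n) \<Rightarrow> 'n \<Rightarrow> 'n \<Rightarrow> bool" where
  "adjacent src tgt u v \<longleftrightarrow> (\<exists>k. (src k = u \<and> tgt k = v) \<or> (src k = v \<and> tgt k = u))"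

definition connected_graph :: "('m \<Rightarrow> 'n) \<Rightarrow> ('m \<Rightarrow> 'n) \<Rightarrow> bool" where
  "connected_graph src tgt \<longleftrightarrow> (\<forall>u v. (adjacent src tgt)\<^sup>*\<^sup>* u v)"

definition incidence :: "('m \<Rightarrow> 'n) \<Rightarrow> ('m \<Rightarrow> 'n) \<Rightarrow> real^'n^'m" where
  "incidence src tgt = (\<chi> k j. if j = src k then 1 else if j = tgt k then -1 else 0)"

definition pinv :: "real^'a^'b \<Rightarrow> real^'b^'a" where
  "pinv A = (THE X. A ** X ** A = A \<and> X ** A ** X = X \<and>
                    transpose (A ** X) = A ** X \<and> transpose (X ** A) = X ** A)"

definition ptdf :: "('m \<Rightarrow> 'n) \<Rightarrow> ('m \<Rightarrow> 'n) \<Rightarrow> real^'n^'m" where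
  "ptdf src tgt = incidence src tgt ** pinv (transpose (incidence src tgt) ** incidence src tgt)"

definition vabs :: "real^'m \<Rightarrow> real^'m" where
  "vabs x = (\<chi> k. \<bar>x $ k\<bar>)"

definition feasible :: "real^'n^'m \<Rightarrow> real \<Rightarrow> real^'n \<Rightarrow> (real^'n) set" where
  "feasible V lam d = {g. (\<forall>j. g $ j \<ge> 0) \<and> sum (\<lambda>j. g $ j) UNIV = sum (\<lambda>j. d $ j) UNIV \<and>
      (\<forall>k. - lam * \<bar>(V *v d) $ k\<bar> \<le> (V *v (d - g)) $ k \<and>
            (V *v (d - g)) $ k \<le> lam * \<bar>(V *v d) $ k\<bar>)}"

definition gstar :: "real^'n^'m \<Rightarrow> real \<Rightarrow> real^'n \<Rightarrow> real^'n" where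
  "gstar V lam d = (THE g. g \<in> feasible V lam d \<and>
      (\<forall>h\<in>feasible V lam d. (1/2) * (\<Sum>j\<in>UNIV. (g $ j)\<^sup>2) \<le> (1/2) * (\<Sum>j\<in>UNIV. (h $ j)\<^sup>2)))"

definition Gamma_set :: "'n \<Rightarrow> (real^'n) set" where
  "Gamma_set n1 = {\<gamma>. \<gamma> $ n1 = 0 \<and> (\<forall>j. \<gamma> $ j \<ge> 0) \<and> sum (\<lambda>j. \<gamma> $ j) UNIV = 1}"

end

theory Submission imports Defs begin

lemma mp_unique:
  fixes A :: "real^'a^'b" and X Y :: "real^'b^'a"
  assumes X1: "A ** X ** A = A" and X2: "X ** A ** X = X"
    and X3: "transpose (A ** X) = A ** X" and X4: "transpose (X ** A) = X ** A"
  assumes Y1: "A ** Y ** A = A" and Y2: "Y ** A ** Y = Y"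
    and Y3: "transpose (A ** Y) = A ** Y" and Y4: "transpose (Y ** A) = Y ** A"
  shows "X = Y"
proof -
  have tA: "transpose A = transpose A ** transpose Y ** transpose A"
    by (metis Y1 matrix_mul_assoc matrix_transpose_mul)
  have "X = X ** (A ** X)" using X2 by (simp add: matrix_mul_assoc)
  also have "\<dots> = X ** transpose X ** transpose A" using X3
    by (metis matrix_mul_assoc matrix_transpose_mul)
  also have "\<dots> = X ** transpose X ** transpose A ** transpose Y ** transpose A"
    by (metis tA matrix_mul_assoc)
  also have "\<dots> = X ** (A ** X) ** (A ** Y)"
    by (metis X3 Y3 matrix_mul_assoc matrix_transpose_mul)
  also have "\<dots> = X ** A ** Y" by (metis X2 matrix_mul_assoc)
  finally have eX: "X = X ** A ** Y" .
  have tA2: "transpose A = transpose A ** transpose X ** transpose A"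
    by (metis X1 matrix_mul_assoc matrix_transpose_mul)
  have "Y = Y ** A ** Y" using Y2 by simp
  also have "\<dots> = transpose A ** transpose Y ** Y" using Y4
    by (metis matrix_mul_assoc matrix_transpose_mul)
  also have "\<dots> = transpose A ** transpose X ** transpose A ** transpose Y ** Y"
    by (metis tA2 matrix_mul_assoc)
  also have "\<dots> = (X ** A) ** (Y ** A) ** Y"
    by (metis X4 Y4 matrix_mul_assoc matrix_transpose_mul)
  also have "\<dots> = X ** A ** Y" by (metis Y2 matrix_mul_assoc)
  finally show ?thesis using eX by simp
qed

definition Jn :: "real^'n^'n" where "Jn = (\<chi> i j. 1 / real CARD('n))"

lemma transpose_add': "transpose (A + B) = transpose A + transpose (B::real^'a^'b)"
  by (simp add: transpose_def vec_eq_iff)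
lemma transpose_diff': "transpose (A - B) = transpose A - transpose (B::real^'a^'b)"
  by (simp add: transpose_def vec_eq_iff)
lemma transpose_zero': "transpose (0::real^'a^'b) = 0"
  by (simp add: transpose_def vec_eq_iff)
lemma transpose_Jn: "transpose Jn = Jn"
  by (simp add: transpose_def Jn_def vec_eq_iff)

lemma Jn_Jn: "Jn ** Jn = (Jn :: real^'n^'n)"
  by (simp add: Jn_def matrix_matrix_mult_def vec_eq_iff)

lemma inc_row_sum:
  assumes "src k \<noteq> tgt k"
  shows "(\<Sum>j\<in>UNIV. incidence src tgt $ k $ j * c) = 0"
proof -
  have "(\<Sum>j\<in>UNIV. incidence src tgt $ k $ j * c)
      = (\<Sum>j\<in>UNIV. (if j = src k then c else 0) - (if j = tgt k then c else 0))"
    using assms by (intro sum.cong) (auto simp: incidence_def)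
  also have "\<dots> = 0" by (simp add: sum_subtractf)
  finally show ?thesis .
qed

lemma inc_mult:
  assumes "src k \<noteq> tgt k"
  shows "(incidence src tgt *v x) $ k = x $ src k - x $ tgt k"
proof -
  have "(incidence src tgt *v x) $ k
      = (\<Sum>j\<in>UNIV. (if j = src k then x $ j else 0) - (if j = tgt k then x $ j else 0))"
    using assms by (auto simp: matrix_vector_mult_def incidence_def intro!: sum.cong)
  also have "\<dots> = x $ src k - x $ tgt k" by (simp add: sum_subtractf)
  finally show ?thesis .
qed

lemma C_Jn:
  assumes "\<forall>k. src k \<noteq> tgt k"
  shows "incidence src tgt ** Jn = 0"
proof -
  have "\<And>i. (\<Sum>k\<in>UNIV. incidence src tgt $ i $ k / real CARD('b)) = 0"
  proof -
    fix i
    show "(\<Sum>k\<in>UNIV. incidence src tgt $ i $ k / real CARD('b)) = 0"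
      using inc_row_sum[of src i tgt "1/real CARD('b)"] assms by simp
  qed
  thus ?thesis by (simp add: matrix_matrix_mult_def Jn_def vec_eq_iff)
qed

lemma Jn_Ct:
  assumes "\<forall>k. src k \<noteq> tgt k"
  shows "Jn ** transpose (incidence src tgt) = 0"
proof -
  have "Jn ** transpose (incidence src tgt) = transpose (incidence src tgt ** transpose Jn)"
    by (simp add: matrix_transpose_mul)
  also have "\<dots> = 0" using C_Jn[OF assms] by (simp add: transpose_Jn transpose_zero')
  finally show ?thesis .
qed

lemma M_inj:
  fixes src tgt :: "'m::finite \<Rightarrow> 'n::finite"
  assumes nl: "\<forall>k. src k \<noteq> tgt k" and conn: "connected_graph src tgt"
    and Mx: "(transpose (incidence src tgt) ** incidence src tgt + Jn) *v x = 0"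
  shows "x = 0"
proof -
  let ?C = "incidence src tgt"
  have "inner x ((transpose ?C ** ?C + Jn) *v x) = 0" using Mx by simp
  moreover have "inner x ((transpose ?C ** ?C) *v x) = inner (?C *v x) (?C *v x)"
    by (metis dot_lmul_matrix inner_commute matrix_vector_mul_assoc transpose_matrix_vector)
  moreover have "inner x (Jn *v x) = (sum (\<lambda>j. x $ j) UNIV)^2 / real CARD('n)"
    by (simp add: inner_vec_def Jn_def matrix_vector_mult_def power2_eq_square
        sum_divide_distrib[symmetric] sum_distrib_right[symmetric])
  ultimately have eq: "inner (?C *v x) (?C *v x) + (sum (\<lambda>j. x $ j) UNIV)^2 / real CARD('n) = 0"
    by (simp add: matrix_vector_mult_add_rdistrib inner_add_right)
  have nn: "(sum (\<lambda>j. x $ j) UNIV)^2 / real CARD('n) \<ge> 0" by simp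
  have "inner (?C *v x) (?C *v x) \<ge> 0" by simp
  hence Cx: "?C *v x = 0" and S: "(sum (\<lambda>j. x $ j) UNIV)^2 / real CARD('n) = 0"
    using eq nn by (smt (verit) inner_eq_zero_iff)+
  have adj: "x $ u = x $ v" if "adjacent src tgt u v" for u v
  proof -
    from that obtain k where "(src k = u \<and> tgt k = v) \<or> (src k = v \<and> tgt k = u)"
      by (auto simp: adjacent_def)
    moreover have "x $ src k = x $ tgt k"
      using Cx inc_mult[of src k tgt x] nl by (simp add: vec_eq_iff)
    ultimately show ?thesis by auto
  qed
  have const: "x $ u = x $ v" for u v
  proof -
    have "(adjacent src tgt)\<^sup>*\<^sup>* u v" using conn by (simp add: connected_graph_def)
    thus ?thesis
      by (induction rule: rtranclp_induct) (auto dest: adj)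
  qed
  fix u0 :: 'n
  have "sum (\<lambda>j. x $ j) UNIV = sum (\<lambda>j::'n. x $ u0) UNIV"
    by (rule sum.cong[OF refl]) (rule const)
  hence "sum (\<lambda>j. x $ j) UNIV = real CARD('n) * x $ u0" by simp
  with S have "x $ u0 = 0" by simp
  thus ?thesis using const[of _ u0] by (simp add: vec_eq_iff)
qed


lemma mm_add_r: "((A::real^'a^'b) + B) ** (C::real^'c^'a) = A ** C + B ** C"
  by (simp add: matrix_matrix_mult_def vec_eq_iff sum.distrib distrib_right)
lemma mm_sub_r: "((A::real^'a^'b) - B) ** (C::real^'c^'a) = A ** C - B ** C"
  by (simp add: matrix_matrix_mult_def vec_eq_iff sum_subtractf left_diff_distrib)
lemma mm_sub_l: "(C::real^'a^'b) ** ((A::real^'c^'a) - B) = C ** A - C ** B"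
  by (simp add: matrix_matrix_mult_def vec_eq_iff sum_subtractf right_diff_distrib)

lemma ptdf_props:
  fixes src tgt :: "'m::finite \<Rightarrow> 'n::finite"
  assumes nl: "\<forall>k. src k \<noteq> tgt k" and conn: "connected_graph src tgt"
  shows "\<exists>X. ptdf src tgt = incidence src tgt ** X \<and>
     transpose (incidence src tgt) ** ptdf src tgt = mat 1 - Jn \<and> ptdf src tgt ** Jn = 0"
proof -
  define C where "C = incidence src tgt"
  define L where "L = transpose C ** C"
  define M where "M = L + Jn"
  have "\<exists>B. B ** M = mat 1"
    unfolding matrix_left_invertible_ker M_def L_def C_def using M_inj[OF nl conn] by blast
  then obtain N where NM: "N ** M = mat 1" by blast
  hence MN: "M ** N = mat 1" using matrix_left_right_inverse by blast
  have LJ: "L ** Jn = 0" unfolding L_def C_def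
    by (metis C_Jn[OF nl] matrix_mul_assoc times0_right)
  have JL: "Jn ** L = 0" unfolding L_def C_def
    by (metis Jn_Ct[OF nl] matrix_mul_assoc times0_left)
  have MJ: "M ** Jn = Jn" by (simp add: M_def mm_add_r LJ Jn_Jn)
  have JM: "Jn ** M = Jn" by (simp add: M_def matrix_add_ldistrib JL Jn_Jn)
  have NJ: "N ** Jn = Jn" by (metis MJ NM matrix_mul_assoc matrix_mul_lid)
  have JN: "Jn ** N = Jn" by (metis JM MN matrix_mul_assoc matrix_mul_rid)
  define X where "X = N - Jn"
  have LM: "L = M - Jn" by (simp add: M_def)
  have LX: "L ** X = mat 1 - Jn"
    by (simp add: X_def mm_sub_l LJ) (simp add: LM mm_sub_r MN JN)
  have XL: "X ** L = mat 1 - Jn"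
    by (simp add: X_def mm_sub_r JL) (simp add: LM mm_sub_l NM NJ)
  have tI: "transpose (mat 1 - Jn) = mat 1 - (Jn::real^'n^'n)"
    by (simp add: transpose_diff' transpose_Jn)
  have P1: "L ** X ** L = L" by (simp add: LX mm_sub_r JL)
  have P2: "X ** L ** X = X" by (simp add: XL mm_sub_r) (simp add: X_def mm_sub_l JN Jn_Jn)
  have pL: "pinv L = X"
    unfolding pinv_def
  proof (rule the_equality)
    show "L ** X ** L = L \<and> X ** L ** X = X \<and> transpose (L ** X) = L ** X \<and> transpose (X ** L) = X ** L"
      using P1 P2 LX XL tI by simp
  next
    fix Y assume "L ** Y ** L = L \<and> Y ** L ** Y = Y \<and> transpose (L ** Y) = L ** Y \<and> transpose (Y ** L) = Y ** L"
    thus "Y = X" using mp_unique[of L X Y] P1 P2 LX XL tI by simp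
  qed
  have pt: "ptdf src tgt = C ** X" using pL by (simp add: ptdf_def L_def C_def)
  have "transpose C ** ptdf src tgt = mat 1 - Jn"
    by (simp add: pt matrix_mul_assoc LX[unfolded L_def])
  moreover have "ptdf src tgt ** Jn = 0"
    by (simp add: pt X_def mm_sub_r NJ Jn_Jn flip: matrix_mul_assoc)
  ultimately show ?thesis using pt C_def by blast
qed

lemma cont_mv[continuous_intros]:
  fixes A :: "real^'n^'m"
  assumes "continuous_on S f"
  shows "continuous_on S (\<lambda>g. (A *v f g) $ k)"
proof -
  have eq: "(\<lambda>g. (A *v f g) $ k) = (\<lambda>g. \<Sum>j\<in>UNIV. A$k$j * f g $ j)"
    by (simp add: matrix_vector_mult_def)
  show ?thesis unfolding eq by (intro continuous_intros assms)
qed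

lemma feasible_closed: "closed (feasible V lam d)"
  unfolding feasible_def
  by (intro closed_Collect_conj closed_Collect_all closed_Collect_le closed_Collect_eq
      continuous_intros)

lemma feasible_bounded:
  assumes "g \<in> feasible V lam d" shows "norm g \<le> (\<Sum>j\<in>UNIV. d $ j)"
proof -
  have "norm g \<le> (\<Sum>j\<in>UNIV. \<bar>g $ j\<bar>)" by (rule norm_le_l1_cart)
  also have "\<dots> = (\<Sum>j\<in>UNIV. g $ j)" using assms by (simp add: feasible_def)
  also have "\<dots> = (\<Sum>j\<in>UNIV. d $ j)" using assms by (simp add: feasible_def)
  finally show ?thesis .
qed

lemma feasible_mid:
  assumes g: "g \<in> feasible V lam d" and h: "h \<in> feasible V lam d"
  shows "(1/2) *\<^sub>R (g + h) \<in> feasible V lam d"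
proof -
  have e: "d - (1/2) *\<^sub>R (g + h) = (1/2) *\<^sub>R ((d - g) + (d - h))"
    by (simp add: vec_eq_iff field_simps)
  have v: "(V *v (d - (1/2) *\<^sub>R (g + h))) $ k = ((V *v (d - g)) $ k + (V *v (d - h)) $ k) / 2" for k
    unfolding e by (simp only: matrix_vector_mult_scaleR matrix_vector_right_distrib) simp
  show ?thesis using g h unfolding feasible_def
    by (auto simp: v sum.distrib sum_divide_distrib[symmetric]) (smt (verit))+
qed

lemma lin_aux: "(fm::real) = (a + b)/2 - 1/2 * s \<Longrightarrow> a \<le> fm \<Longrightarrow> a = b \<Longrightarrow> s \<le> 0"
  by (simp add: field_simps)

lemma gstar_char:
  fixes V :: "real^'n^'m" and d :: "real^'n"
  assumes lam: "0 \<le> lam" and dnn: "\<forall>j. d$j \<ge> 0"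
  shows "gstar V lam d \<in> feasible V lam d \<and>
     (\<forall>h\<in>feasible V lam d. (\<Sum>j\<in>UNIV. (gstar V lam d $ j)\<^sup>2) \<le> (\<Sum>j\<in>UNIV. (h $ j)\<^sup>2))"
proof -
  let ?F = "feasible V lam d"
  let ?f = "\<lambda>g::real^'n. (1/2) * (\<Sum>j\<in>UNIV. (g $ j)\<^sup>2)"
  have dF: "d \<in> ?F" using lam dnn by (simp add: feasible_def)
  have "compact ?F"
    using feasible_closed feasible_bounded by (metis bounded_iff compact_eq_bounded_closed)
  moreover have "continuous_on ?F ?f" by (intro continuous_intros)
  ultimately obtain g where gF: "g \<in> ?F" and gmin: "\<forall>h\<in>?F. ?f g \<le> ?f h"
    using continuous_attains_inf[of ?F ?f] dF by blast
  have uniq: "h = g" if hF: "h \<in> ?F" and hmin: "\<forall>k\<in>?F. ?f h \<le> ?f k" for h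
  proof -
    have mF: "(1/2) *\<^sub>R (g + h) \<in> ?F" using feasible_mid gF hF by blast
    have eq: "?f g = ?f h" using gmin hmin gF hF by force
    have pt: "((1/2) *\<^sub>R (g + h)) $ j ^ 2 = (g$j^2 + h$j^2)/2 - ((g$j - h$j)/2)^2" for j
      by (simp add: power2_eq_square field_simps)
    have "(\<Sum>j\<in>UNIV. ((1/2) *\<^sub>R (g + h)) $ j ^ 2) = (\<Sum>j\<in>UNIV. g$j^2)/2 + (\<Sum>j\<in>UNIV. h$j^2)/2 - (\<Sum>j\<in>UNIV. ((g$j - h$j)/2)^2)"
      unfolding pt by (simp add: sum_subtractf sum.distrib sum_divide_distrib add_divide_distrib)
    hence "?f ((1/2) *\<^sub>R (g + h)) = (?f g + ?f h)/2 - (1/2) * (\<Sum>j\<in>UNIV. ((g$j - h$j)/2)^2)"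
      by (simp add: algebra_simps)
    moreover have "?f g \<le> ?f ((1/2) *\<^sub>R (g + h))" using gmin mF by blast
    ultimately have "(\<Sum>j\<in>UNIV. ((g$j - h$j)/2)^2) \<le> 0" using eq by (rule lin_aux)
    hence "(\<Sum>j\<in>UNIV. ((g$j - h$j)/2)^2) = 0"
      using sum_nonneg[of UNIV "\<lambda>j. ((g$j - h$j)/2)^2"] by simp
    hence "\<forall>j\<in>UNIV. ((g$j - h$j)/2)^2 = 0"
      by (subst sum_nonneg_eq_0_iff[symmetric]) auto
    thus ?thesis by (simp add: vec_eq_iff)
  qed
  have "gstar V lam d = g"
    unfolding gstar_def
  proof (rule the_equality)
    show "g \<in> ?F \<and> (\<forall>h\<in>?F. ?f g \<le> ?f h)" using gF gmin by blast
  next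
    fix h assume "h \<in> ?F \<and> (\<forall>k\<in>?F. ?f h \<le> ?f k)"
    thus "h = g" using uniq by blast
  qed
  thus ?thesis using gF gmin by auto
qed


theorem mainTheorem10:
  fixes src tgt :: "'m::finite \<Rightarrow> 'n::finite"
    and n1 :: 'n and lam :: real and \<gamma> :: "real^'n" and i :: 'm
  assumes "simple_oriented_graph src tgt"
    and "connected_graph src tgt"
    and "0 < lam" and "lam < 1"
    and "\<gamma> \<in> Gamma_set n1"
    and "\<exists>\<delta>>0. \<forall>\<epsilon>. 0 \<le> \<epsilon> \<and> \<epsilon> \<le> \<delta> \<longrightarrow>
           (\<forall>k. (ptdf src tgt *v (axis n1 1 + \<epsilon> *\<^sub>R \<gamma>)) $ k \<ge> 0)"
    and "(ptdf src tgt *v axis n1 1) $ i > 0"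
  shows "\<forall>\<^sub>F \<epsilon> in at_right 0.
           (ptdf src tgt *v gstar (ptdf src tgt) lam (axis n1 1 + \<epsilon> *\<^sub>R \<gamma>)) $ i
             < (1 + lam) * (ptdf src tgt *v (axis n1 1 + \<epsilon> *\<^sub>R \<gamma>)) $ i"
proof -
  note simp_g = assms(1) and conn = assms(2) and lam0 = assms(3) and lam1 = assms(4)
    and gam = assms(5) and hypd = assms(6) and hypi = assms(7)
  have nl: "\<forall>k. src k \<noteq> tgt k" using simp_g by (simp add: simple_oriented_graph_def)
  define V where "V = ptdf src tgt"
  define C where "C = incidence src tgt"
  define e1 where "e1 = (axis n1 1 :: real^'n)"
  define ones where "ones = ((\<chi> j. 1) :: real^'n)"
  define nn where "nn = real CARD('n)"
  have nn_pos: "nn > 0" by (simp add: nn_def)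
  obtain X where VX: "V = C ** X" and CtV: "transpose C ** V = mat 1 - Jn" and VJ: "V ** Jn = 0"
    using ptdf_props[OF nl conn] unfolding V_def C_def by blast
  have F1: "(\<Sum>k\<in>UNIV. C$k$v * (V *v y)$k) = y$v - (\<Sum>j\<in>UNIV. y$j)/nn" for y v
  proof -
    have "transpose C *v (V *v y) = (mat 1 - Jn) *v y" by (simp add: matrix_vector_mul_assoc CtV)
    hence "(transpose C *v (V *v y)) $ v = ((mat 1 - Jn) *v y) $ v" by simp
    moreover have "(transpose C *v (V *v y)) $ v = (\<Sum>k\<in>UNIV. C$k$v * (V *v y)$k)"
      by (simp add: matrix_vector_mult_def transpose_def)
    moreover have "(Jn *v y) $ v = (\<Sum>j\<in>UNIV. y$j)/nn"
      by (simp add: matrix_vector_mult_def Jn_def nn_def sum_divide_distrib)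
    moreover have "((mat 1 - Jn) *v y) $ v = y$v - (Jn *v y) $ v"
      by (simp only: matrix_vector_mult_diff_rdistrib matrix_vector_mul_lid vector_minus_component)
    ultimately show ?thesis by simp
  qed
  have F2: "V *v ones = 0"
  proof -
    have "Jn *v ones = ones" using nn_pos by (simp add: Jn_def ones_def matrix_vector_mult_def vec_eq_iff nn_def)
    hence "V *v ones = (V ** Jn) *v ones" by (metis matrix_vector_mul_assoc)
    thus ?thesis by (simp add: VJ)
  qed
  have e1c: "e1 $ j = (if j = n1 then 1 else 0)" for j by (simp add: e1_def axis_def)
  have e1s: "(\<Sum>j\<in>UNIV. e1 $ j) = 1" by (simp add: e1c)
  have g0: "\<gamma> $ n1 = 0" and gnn: "\<forall>j. \<gamma> $ j \<ge> 0" and gs: "(\<Sum>j\<in>UNIV. \<gamma> $ j) = 1"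
    using gam by (auto simp: Gamma_set_def)
  obtain \<delta> where \<delta>0: "\<delta> > 0" and hd: "\<And>\<epsilon> k. 0 \<le> \<epsilon> \<Longrightarrow> \<epsilon> \<le> \<delta> \<Longrightarrow> (V *v (e1 + \<epsilon> *\<^sub>R \<gamma>)) $ k \<ge> 0"
    using hypd unfolding V_def e1_def by blast
  have Ve1nn: "(V *v e1) $ k \<ge> 0" for k using hd[of 0 k] \<delta>0 by simp
  have F3: "(V *v e1) $ k = 0" if tk: "tgt k = n1" for k
  proof -
    define \<phi> where "\<phi> = X *v e1"
    have yk: "(V *v e1) $ k' = \<phi> $ src k' - \<phi> $ tgt k'" for k'
    proof -
      have "V *v e1 = C *v \<phi>" by (simp add: VX \<phi>_def matrix_vector_mul_assoc)
      thus ?thesis using inc_mult[of src k' tgt \<phi>] nl by (simp add: C_def)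
    qed
    define M where "M = Max (range (\<lambda>j. \<phi> $ j))"
    have Mge: "\<phi> $ j \<le> M" for j unfolding M_def by (rule Max_ge) auto
    have "M \<in> range (\<lambda>j. \<phi> $ j)" unfolding M_def by (rule Max_in) auto
    then obtain v where v: "\<phi> $ v = M" by auto
    have "\<phi> $ n1 = M"
    proof (rule ccontr)
      assume ne: "\<phi> $ n1 \<noteq> M"
      hence vn: "v \<noteq> n1" using v by auto
      have e1v: "e1 $ v = 0" using vn by (simp add: e1c)
      have s1: "(\<Sum>k\<in>UNIV. C$k$v * (V *v e1)$k) = - 1/nn" using F1[where y=e1 and v=v] unfolding e1s e1v by simp
      have s2: "(\<Sum>k\<in>UNIV. C$k$v * (V *v e1)$k) \<ge> 0"
      proof (rule sum_nonneg)
        fix k' :: 'm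
        show "C$k'$v * (V *v e1)$k' \<ge> 0"
        proof (cases "v = src k'")
          case True thus ?thesis using Ve1nn[of k'] by (simp add: C_def incidence_def)
        next
          case False
          show ?thesis
          proof (cases "v = tgt k'")
            case True
            have "(V *v e1) $ k' \<le> 0" using yk[of k'] Mge[of "src k'"] v True by simp
            thus ?thesis using False True by (simp add: C_def incidence_def)
          next
            case False2: False
            thus ?thesis using False by (simp add: C_def incidence_def)
          qed
        qed
      qed
      have "- 1/nn < 0" using nn_pos by simp
      thus False using s1 s2 by linarith
    qed
    hence "(V *v e1) $ k \<le> 0" using yk[of k] Mge[of "src k"] tk by simp
    thus ?thesis using Ve1nn[of k] by simp
  qed
  define T where "T = (\<Sum>k\<in>UNIV. if tgt k = n1 then (V *v \<gamma>)$k else 0)"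
  define Q where "Q = (\<Sum>j\<in>UNIV. ((1-lam)*\<gamma>$j + lam/nn)^2)"
  define K where "K = 4*lam*(1-lam)*T + Q"
  define S where "S = (\<Sum>j\<in>UNIV. \<bar>V$i$j\<bar>)"
  define w0 where "w0 = (1-lam) *\<^sub>R e1 + (lam/nn) *\<^sub>R ones"
  have w0c: "w0 $ j = (1-lam) * e1$j + lam/nn" for j by (simp add: w0_def ones_def)
  have Vw0: "V *v w0 = (1-lam) *\<^sub>R (V *v e1)"
    by (simp add: w0_def matrix_vector_right_distrib matrix_vector_mult_scaleR F2)
  have sum_e1: "(\<Sum>j\<in>UNIV. e1$j * x j) = x n1" for x :: "'n \<Rightarrow> real"
  proof -
    have "(\<Sum>j\<in>UNIV. e1$j * x j) = (\<Sum>j\<in>UNIV. if j = n1 then x j else 0)"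
      by (rule sum.cong) (auto simp: e1c)
    thus ?thesis by simp
  qed
  have sum_w0: "(\<Sum>j\<in>UNIV. w0$j * x j) = (1-lam) * x n1 + lam/nn * (\<Sum>j\<in>UNIV. x j)" for x
  proof -
    have "(\<Sum>j\<in>UNIV. w0$j * x j) = (\<Sum>j\<in>UNIV. (1-lam) * (e1$j * x j) + lam/nn * x j)"
      by (rule sum.cong) (auto simp: w0c algebra_simps)
    also have "\<dots> = (1-lam) * x n1 + lam/nn * (\<Sum>j\<in>UNIV. x j)"
      by (simp add: sum.distrib sum_distrib_left[symmetric] sum_e1 sum_divide_distrib[symmetric])
    finally show ?thesis .
  qed
  have sw0: "(\<Sum>j\<in>UNIV. w0$j) = 1"
    using sum_w0[of "\<lambda>j. 1"] nn_pos by (simp add: nn_def)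
  have sqexp: "(\<Sum>j\<in>UNIV. (w0$j + x j)^2) = (\<Sum>j\<in>UNIV. (w0$j)^2) + 2 * (\<Sum>j\<in>UNIV. w0$j * x j) + (\<Sum>j\<in>UNIV. (x j)^2)" for x
    by (simp add: power2_sum sum.distrib sum_distrib_left mult.assoc)
  have est: "(V *v gstar V lam (e1 + \<epsilon> *\<^sub>R \<gamma>)) $ i \<le> (1-lam) * (V *v e1)$i + S * sqrt (K*\<epsilon>)"
    if e0: "0 < \<epsilon>" and ed: "\<epsilon> \<le> \<delta>" and e1': "\<epsilon> \<le> 1" for \<epsilon>
  proof -
    define d where "d = e1 + \<epsilon> *\<^sub>R \<gamma>"
    define g where "g = gstar V lam d"
    define s where "s = 1 + \<epsilon>"
    have dc: "d $ j = e1$j + \<epsilon> * \<gamma>$j" for j by (simp add: d_def)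
    have dnn: "\<forall>j. d$j \<ge> 0" using gnn e0 by (auto simp: dc e1c)
    have sd: "(\<Sum>j\<in>UNIV. d$j) = s" by (simp add: dc sum.distrib e1s sum_distrib_left[symmetric] gs s_def)
    have dn1: "d $ n1 = 1" by (simp add: dc e1c g0)
    have Vdnn: "(V *v d)$k \<ge> 0" for k using hd[of \<epsilon> k] e0 ed by (simp add: d_def)
    have Vdc: "(V *v d)$k = (V *v e1)$k + \<epsilon> * (V *v \<gamma>)$k" for k
      by (simp add: d_def matrix_vector_right_distrib matrix_vector_mult_scaleR)
    have gc: "g \<in> feasible V lam d \<and> (\<forall>h\<in>feasible V lam d. (\<Sum>j\<in>UNIV. (g $ j)\<^sup>2) \<le> (\<Sum>j\<in>UNIV. (h $ j)\<^sup>2))"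
      unfolding g_def by (rule gstar_char) (use lam0 dnn in auto)
    hence gF: "g \<in> feasible V lam d" and gmin: "\<And>h. h \<in> feasible V lam d \<Longrightarrow> (\<Sum>j\<in>UNIV. (g $ j)\<^sup>2) \<le> (\<Sum>j\<in>UNIV. (h $ j)\<^sup>2)"
      by auto
    have gs': "(\<Sum>j\<in>UNIV. g$j) = s" using gF sd by (simp add: feasible_def)
    have gb: "- lam * \<bar>(V *v d) $ k\<bar> \<le> (V *v d) $ k - (V *v g) $ k \<and> (V *v d) $ k - (V *v g) $ k \<le> lam * \<bar>(V *v d) $ k\<bar>" for k
      using gF by (simp add: feasible_def matrix_vector_mult_diff_distrib)
    have lo: "(V *v g)$k \<ge> (1-lam) * (V *v d)$k" for k using gb[of k] Vdnn[of k] by (simp add: algebra_simps)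
    have up: "(V *v g)$k \<le> (1+lam) * (V *v d)$k" for k using gb[of k] Vdnn[of k] by (simp add: algebra_simps)
    have tA: "C$k$n1 * (V *v g)$k \<ge> (1-lam) * (C$k$n1 * (V *v d)$k) - 2*lam*\<epsilon>*(if tgt k = n1 then (V *v \<gamma>)$k else 0)" for k
    proof (cases "n1 = src k")
      case True
      hence "tgt k \<noteq> n1" using nl by metis
      thus ?thesis using True lo[of k] by (simp add: C_def incidence_def)
    next
      case False
      show ?thesis
      proof (cases "n1 = tgt k")
        case True
        have "(V *v d)$k = \<epsilon> * (V *v \<gamma>)$k" using Vdc[of k] F3[of k] True by simp
        hence "(V *v g)$k \<le> (1-lam) * (V *v d)$k + 2*lam*\<epsilon>*(V *v \<gamma>)$k" using up[of k] by (simp add: algebra_simps)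
        thus ?thesis using False True by (simp add: C_def incidence_def)
      next
        case False2: False
        thus ?thesis using False by (simp add: C_def incidence_def)
      qed
    qed
    have "(\<Sum>k\<in>UNIV. C$k$n1 * (V *v g)$k) \<ge> (\<Sum>k\<in>UNIV. (1-lam) * (C$k$n1 * (V *v d)$k) - 2*lam*\<epsilon>*(if tgt k = n1 then (V *v \<gamma>)$k else 0))"
      by (rule sum_mono) (rule tA)
    also have "(\<Sum>k\<in>UNIV. (1-lam) * (C$k$n1 * (V *v d)$k) - 2*lam*\<epsilon>*(if tgt k = n1 then (V *v \<gamma>)$k else 0))
       = (1-lam) * (\<Sum>k\<in>UNIV. C$k$n1 * (V *v d)$k) - 2*lam*\<epsilon>*T"
      by (simp add: sum_subtractf sum_distrib_left T_def)
    finally have A0: "(\<Sum>k\<in>UNIV. C$k$n1 * (V *v g)$k) \<ge> (1-lam) * (\<Sum>k\<in>UNIV. C$k$n1 * (V *v d)$k) - 2*lam*\<epsilon>*T" .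
    have A: "g$n1 - s/nn \<ge> (1-lam) * (1 - s/nn) - 2*lam*\<epsilon>*T"
      using A0 F1[where y=g and v=n1] F1[where y=d and v=n1] gs' sd dn1 by simp
    define h where "h = (\<chi> j. (1-lam) * d$j + lam * s / nn)"
    have hc: "h$j = (1-lam) * d$j + lam * s / nn" for j by (simp add: h_def)
    have dh: "d - h = lam *\<^sub>R d - (lam * s / nn) *\<^sub>R ones"
      by (simp add: vec_eq_iff hc ones_def algebra_simps)
    have Vdh: "V *v (d - h) = lam *\<^sub>R (V *v d)"
      by (simp add: dh matrix_vector_mult_diff_distrib matrix_vector_mult_scaleR F2)
    have hF: "h \<in> feasible V lam d"
    proof -
      have "\<forall>j. h$j \<ge> 0" using dnn lam1 lam0 nn_pos e0 by (simp add: hc s_def)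
      moreover have "(\<Sum>j\<in>UNIV. h$j) = (\<Sum>j\<in>UNIV. d$j)"
      proof -
        have "(\<Sum>j\<in>UNIV. h$j) = (\<Sum>j\<in>UNIV. (1-lam)*d$j) + (\<Sum>j::'n\<in>UNIV. lam * s / nn)"
          by (simp add: hc sum.distrib)
        also have "\<dots> = (1-lam) * s + nn * (lam * s / nn)"
          by (simp add: sum_distrib_left[symmetric] sd nn_def)
        also have "\<dots> = s" using nn_pos by (simp add: algebra_simps)
        finally show ?thesis using sd by simp
      qed
      moreover have "\<forall>k. - lam * \<bar>(V *v d) $ k\<bar> \<le> (V *v (d - h)) $ k \<and> (V *v (d - h)) $ k \<le> lam * \<bar>(V *v d) $ k\<bar>"
        using Vdnn lam0 by (simp add: Vdh)
      ultimately show ?thesis by (simp add: feasible_def)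
    qed
    have B: "(\<Sum>j\<in>UNIV. (g $ j)\<^sup>2) \<le> (\<Sum>j\<in>UNIV. (h $ j)\<^sup>2)" using gmin hF by blast
    define r where "r = g - w0"
    define q where "q j = (1-lam)*\<epsilon>*\<gamma>$j + lam*\<epsilon>/nn" for j
    have gr: "g$j = w0$j + r$j" for j by (simp add: r_def)
    have hq: "h$j = w0$j + q j" for j by (simp add: hc q_def w0c dc s_def algebra_simps add_divide_distrib)
    have Sg: "(\<Sum>j\<in>UNIV. (g $ j)\<^sup>2) = (\<Sum>j\<in>UNIV. (w0$j)^2) + 2 * (\<Sum>j\<in>UNIV. w0$j * r$j) + (\<Sum>j\<in>UNIV. (r$j)^2)"
      unfolding gr by (rule sqexp)
    have Sh: "(\<Sum>j\<in>UNIV. (h $ j)\<^sup>2) = (\<Sum>j\<in>UNIV. (w0$j)^2) + 2 * (\<Sum>j\<in>UNIV. w0$j * q j) + (\<Sum>j\<in>UNIV. (q j)^2)"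
      unfolding hq by (rule sqexp)
    have sr: "(\<Sum>j\<in>UNIV. r$j) = \<epsilon>" using gs' sw0 by (simp add: r_def sum_subtractf s_def)
    have sq: "(\<Sum>j\<in>UNIV. q j) = \<epsilon>"
    proof -
      have "(\<Sum>j\<in>UNIV. q j) = (\<Sum>j\<in>UNIV. (1-lam)*\<epsilon>*\<gamma>$j) + (\<Sum>j::'n\<in>UNIV. lam*\<epsilon>/nn)"
        by (simp add: q_def sum.distrib)
      also have "\<dots> = (1-lam)*\<epsilon> + nn * (lam*\<epsilon>/nn)"
        by (simp add: sum_distrib_left[symmetric] gs nn_def)
      also have "\<dots> = \<epsilon>" using nn_pos by (simp add: algebra_simps)
      finally show ?thesis .
    qed
    have qn1: "q n1 = lam*\<epsilon>/nn" by (simp add: q_def g0)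
    have rn1: "r$n1 = g$n1 - (1-lam) - lam/nn" by (simp add: r_def w0c e1c)
    have Sqq: "(\<Sum>j\<in>UNIV. (q j)^2) = \<epsilon>^2 * Q"
    proof -
      have "(\<Sum>j\<in>UNIV. (q j)^2) = (\<Sum>j\<in>UNIV. \<epsilon>^2 * ((1-lam)*\<gamma>$j + lam/nn)^2)"
        by (rule sum.cong) (simp_all add: q_def power2_eq_square algebra_simps)
      thus ?thesis by (simp add: Q_def sum_distrib_left)
    qed
    have Q0: "Q \<ge> 0" by (simp add: Q_def sum_nonneg)
    have "\<epsilon>^2 * Q \<le> \<epsilon> * Q" using Q0 e0 e1' by (simp add: power2_eq_square mult_right_mono)
    have rlow: "r$n1 \<ge> lam*\<epsilon>/nn - 2*lam*\<epsilon>*T"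
    proof -
      have i1: "lam * s / nn = lam/nn + lam*\<epsilon>/nn" by (simp add: s_def add_divide_distrib algebra_simps)
      have i2: "(1-lam)*(1 - s/nn) = (1-lam) - s/nn + lam * s / nn" using nn_pos by (simp add: field_simps)
      show ?thesis using A rn1 i1 i2 by linarith
    qed
    have key: "(\<Sum>j\<in>UNIV. (r$j)^2) \<le> 2*(1-lam)*(q n1 - r$n1) + \<epsilon>^2 * Q"
      using B Sg Sh sum_w0[of "\<lambda>j. r$j"] sum_w0[of q] sr sq Sqq by (simp add: algebra_simps)
    have "2*(1-lam)*(q n1 - r$n1) \<le> 2*(1-lam)*(2*lam*\<epsilon>*T)"
      using rlow qn1 lam1 by (intro mult_left_mono) auto
    hence rsq: "(\<Sum>j\<in>UNIV. (r$j)^2) \<le> K*\<epsilon>"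
      using key \<open>\<epsilon>^2 * Q \<le> \<epsilon> * Q\<close> by (simp add: K_def algebra_simps)
    have rj: "\<bar>r$j\<bar> \<le> sqrt (K*\<epsilon>)" for j
    proof -
      have "(r$j)^2 \<le> (\<Sum>j\<in>UNIV. (r$j)^2)"
        by (rule member_le_sum) auto
      hence "\<bar>r$j\<bar>^2 \<le> K*\<epsilon>" using rsq by simp
      thus ?thesis by (rule real_le_rsqrt)
    qed
    have "(V *v g) = V *v w0 + V *v r" by (simp add: r_def matrix_vector_mult_diff_distrib)
    hence "(V *v g)$i = (V *v w0)$i + (V *v r)$i" by simp
    moreover have "(V *v w0)$i = (1-lam) * (V *v e1)$i" by (simp add: Vw0)
    moreover have "(V *v r)$i = (\<Sum>j\<in>UNIV. V$i$j * r$j)" by (simp add: matrix_vector_mult_def)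
    ultimately have "(V *v g)$i = (1-lam) * (V *v e1)$i + (\<Sum>j\<in>UNIV. V$i$j * r$j)" by simp
    moreover have "(\<Sum>j\<in>UNIV. V$i$j * r$j) \<le> S * sqrt (K*\<epsilon>)"
    proof -
      have "(\<Sum>j\<in>UNIV. V$i$j * r$j) \<le> (\<Sum>j\<in>UNIV. \<bar>V$i$j\<bar> * sqrt (K*\<epsilon>))"
      proof (rule sum_mono)
        fix j
        have "V$i$j * r$j \<le> \<bar>V$i$j\<bar> * \<bar>r$j\<bar>" by (metis abs_ge_self abs_mult)
        also have "\<dots> \<le> \<bar>V$i$j\<bar> * sqrt (K*\<epsilon>)" using rj[of j] by (simp add: mult_left_mono)
        finally show "V$i$j * r$j \<le> \<bar>V$i$j\<bar> * sqrt (K*\<epsilon>)" .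
      qed
      thus ?thesis by (simp add: S_def sum_distrib_right)
    qed
    ultimately show ?thesis by (simp add: g_def d_def)
  qed
  define a where "a = (V *v e1)$i"
  define b where "b = (V *v \<gamma>)$i"
  have a0: "a > 0" using hypi by (simp add: a_def V_def e1_def)
  have lim: "((\<lambda>\<epsilon>. S * sqrt (K*\<epsilon>) + (1+lam)*\<epsilon>*\<bar>b\<bar>) \<longlongrightarrow> S * sqrt (K*0) + (1+lam)*0*\<bar>b\<bar>) (at_right 0)"
    by (intro tendsto_intros)
  hence lim0: "((\<lambda>\<epsilon>. S * sqrt (K*\<epsilon>) + (1+lam)*\<epsilon>*\<bar>b\<bar>) \<longlongrightarrow> 0) (at_right 0)" by simp
  have "0 < 2*lam*a" using a0 lam0 by simp
  from order_tendstoD(2)[OF lim0 this]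
  have ev1: "eventually (\<lambda>\<epsilon>. S * sqrt (K*\<epsilon>) + (1+lam)*\<epsilon>*\<bar>b\<bar> < 2*lam*a) (at_right 0)" .
  have ev2: "eventually (\<lambda>\<epsilon>. 0 < \<epsilon> \<and> \<epsilon> < min \<delta> 1) (at_right (0::real))"
    unfolding eventually_at_right_field using \<delta>0 by (intro exI[of _ "min \<delta> 1"]) auto
  have "\<forall>\<^sub>F \<epsilon> in at_right 0.
           (V *v gstar V lam (e1 + \<epsilon> *\<^sub>R \<gamma>)) $ i < (1 + lam) * (V *v (e1 + \<epsilon> *\<^sub>R \<gamma>)) $ i"
  proof (rule eventually_mono[OF eventually_conj[OF ev1 ev2]])
    fix \<epsilon> :: real
    assume H: "S * sqrt (K*\<epsilon>) + (1+lam)*\<epsilon>*\<bar>b\<bar> < 2*lam*a \<and> 0 < \<epsilon> \<and> \<epsilon> < min \<delta> 1"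
    have E: "(V *v gstar V lam (e1 + \<epsilon> *\<^sub>R \<gamma>)) $ i \<le> (1-lam) * a + S * sqrt (K*\<epsilon>)"
      using est[of \<epsilon>] H by (simp add: a_def)
    have Vd: "(V *v (e1 + \<epsilon> *\<^sub>R \<gamma>)) $ i = a + \<epsilon> * b"
      by (simp add: a_def b_def matrix_vector_right_distrib matrix_vector_mult_scaleR)
    have "\<epsilon> * (- \<bar>b\<bar>) \<le> \<epsilon> * b" using H by (intro mult_left_mono) auto
    hence "\<epsilon> * b \<ge> - (\<epsilon> * \<bar>b\<bar>)" by simp
    hence P: "(1+lam) * (\<epsilon> * b) \<ge> - ((1+lam) * (\<epsilon> * \<bar>b\<bar>))" using lam0
      by (metis (no_types, opaque_lifting) less_eq_real_def add_pos_pos mult_left_mono mult_minus_right zero_less_one)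
    have "(V *v gstar V lam (e1 + \<epsilon> *\<^sub>R \<gamma>)) $ i \<le> (1-lam) * a + S * sqrt (K*\<epsilon>)" by (rule E)
    also have "\<dots> < (1-lam) * a + (2*lam*a - (1+lam)*\<epsilon>*\<bar>b\<bar>)" using H by argo
    also have "\<dots> = (1+lam) * a - (1+lam) * (\<epsilon> * \<bar>b\<bar>)" by (simp add: algebra_simps)
    also have "\<dots> \<le> (1+lam) * a + (1+lam) * (\<epsilon> * b)" using P by argo
    also have "\<dots> = (1 + lam) * (V *v (e1 + \<epsilon> *\<^sub>R \<gamma>)) $ i" by (simp add: Vd a_def b_def algebra_simps)
    finally show "(V *v gstar V lam (e1 + \<epsilon> *\<^sub>R \<gamma>)) $ i < (1 + lam) * (V *v (e1 + \<epsilon> *\<^sub>R \<gamma>)) $ i" .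
  qed
  thus ?thesis by (simp add: V_def e1_def)
qed

end
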